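(* The weighted greedy algorithm w-HHL is an $O(\sqrt n\log n)$-approximation algorithm for HL: on every input graph with $n$ vertices, the hub labeling it outputs has total size at most $O(\sqrt n\log n)$ times the minimum total size of a hub labeling of that graph.
   Context: Input: a directed graph $G=(V,E)$, $n=|V|$, with nonnegative arc lengths and no zero-length cycles. A hub labeling (HL) assigns to each $v$ a forward label $L_f(v)\subseteq V$ and backward label $L_b(v)\subseteq V$ such that for every ordered pair $(u,w)$ with $w$ reachable from $u$, $L_f(u)\cap L_b(w)$ contains a vertex on some shortest $u$–$w$ path; its size is $\sum_v(|L_f(v)|+|L_b(v)|)$. (Undirected graphs: $L_f=L_b=L$, unordered pairs, size $\sum_v|L(v)|$.) w-HHL: start with empty labels; $U$ is the set of uncovered pairs. For each not-yet-selected vertex $v$, the center graph $G_v$ is the bipartite graph with two copies $X,Y$ of $V$ and an arc $(u,w)$ for each $(u,w)\in U$ having a shortest $u$–$w$ path through $v$, with isolated vertices deleted (undirected case: graph on $V$ with an edge, possibly a loop, for each such uncovered unordered pair, isolated vertices deleted). In each iteration w-HHL selects a not-yet-selected $v$ whose center graph has maximum density (number of edges divided by number of non-isolated vertices; ties arbitrary) and adds $v$ to $L_f(u)$ for each vertex $u\in X$ and $L_b(w)$ for each $w\in Y$ of that center graph (undirected: to $L(u)$ for each of its vertices $u$), until all pairs are covered. *)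

theory Defs
  imports Main Complex_Main
begin

definition walk :: "(nat \<times> nat) set \<Rightarrow> nat list \<Rightarrow> bool" where
  "walk E p \<longleftrightarrow> p \<noteq> [] \<and> successively (\<lambda>x y. (x, y) \<in> E) p"

definition walk_len :: "(nat \<Rightarrow> nat \<Rightarrow> real) \<Rightarrow> nat list \<Rightarrow> real" where
  "walk_len l p = sum_list (map (\<lambda>(x, y). l x y) (zip p (tl p)))"

definition is_path :: "nat set \<Rightarrow> (nat \<times> nat) set \<Rightarrow> nat \<Rightarrow> nat \<Rightarrow> nat list \<Rightarrow> bool" where
  "is_path V E u w p \<longleftrightarrow> walk E p \<and> hd p = u \<and> last p = w \<and> distinct p \<and> set p \<subseteq> V"

definition shortest_path ::
  "nat set \<Rightarrow> (nat \<times> nat) set \<Rightarrow> (nat \<Rightarrow> nat \<Rightarrow> real) \<Rightarrow> nat \<Rightarrow> nat \<Rightarrow> nat list \<Rightarrow> bool" where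
  "shortest_path V E l u w p \<longleftrightarrow>
     is_path V E u w p \<and> (\<forall>q. is_path V E u w q \<longrightarrow> walk_len l p \<le> walk_len l q)"

definition reachable :: "nat set \<Rightarrow> (nat \<times> nat) set \<Rightarrow> nat \<Rightarrow> nat \<Rightarrow> bool" where
  "reachable V E u w \<longleftrightarrow> (\<exists>p. is_path V E u w p)"

definition graph_ok :: "nat set \<Rightarrow> (nat \<times> nat) set \<Rightarrow> (nat \<Rightarrow> nat \<Rightarrow> real) \<Rightarrow> bool" where
  "graph_ok V E l \<longleftrightarrow> finite V \<and> E \<subseteq> V \<times> V \<and> (\<forall>(x, y) \<in> E. 0 \<le> l x y) \<and>
     (\<forall>p. walk E p \<and> 2 \<le> length p \<and> hd p = last p \<longrightarrow> 0 < walk_len l p)"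

definition covers ::
  "nat set \<Rightarrow> (nat \<times> nat) set \<Rightarrow> (nat \<Rightarrow> nat \<Rightarrow> real) \<Rightarrow> (nat \<Rightarrow> nat set) \<Rightarrow> (nat \<Rightarrow> nat set)
     \<Rightarrow> nat \<Rightarrow> nat \<Rightarrow> bool" where
  "covers V E l Lf Lb u w \<longleftrightarrow>
     (\<exists>h \<in> Lf u \<inter> Lb w. \<exists>p. shortest_path V E l u w p \<and> h \<in> set p)"

definition is_HL ::
  "nat set \<Rightarrow> (nat \<times> nat) set \<Rightarrow> (nat \<Rightarrow> nat \<Rightarrow> real) \<Rightarrow> (nat \<Rightarrow> nat set) \<Rightarrow> (nat \<Rightarrow> nat set) \<Rightarrow> bool" where
  "is_HL V E l Lf Lb \<longleftrightarrow> (\<forall>v \<in> V. Lf v \<subseteq> V \<and> Lb v \<subseteq> V) \<and>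
     (\<forall>u \<in> V. \<forall>w \<in> V. reachable V E u w \<longrightarrow> covers V E l Lf Lb u w)"

definition hl_size :: "nat set \<Rightarrow> (nat \<Rightarrow> nat set) \<Rightarrow> (nat \<Rightarrow> nat set) \<Rightarrow> nat" where
  "hl_size V Lf Lb = (\<Sum>v \<in> V. card (Lf v) + card (Lb v))"

definition uncovered ::
  "nat set \<Rightarrow> (nat \<times> nat) set \<Rightarrow> (nat \<Rightarrow> nat \<Rightarrow> real) \<Rightarrow> (nat \<Rightarrow> nat set) \<Rightarrow> (nat \<Rightarrow> nat set)
     \<Rightarrow> (nat \<times> nat) set" where
  "uncovered V E l Lf Lb = {(u, w). u \<in> V \<and> w \<in> V \<and> reachable V E u w \<and> \<not> covers V E l Lf Lb u w}"

text \<open>Arc set of the center graph G_v (bipartite, X = left copies, Y = right copies);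
  its non-isolated vertices are Domain (X side) and Range (Y side).\<close>
definition center_graph ::
  "nat set \<Rightarrow> (nat \<times> nat) set \<Rightarrow> (nat \<Rightarrow> nat \<Rightarrow> real) \<Rightarrow> (nat \<Rightarrow> nat set) \<Rightarrow> (nat \<Rightarrow> nat set)
     \<Rightarrow> nat \<Rightarrow> (nat \<times> nat) set" where
  "center_graph V E l Lf Lb v =
     {(u, w) \<in> uncovered V E l Lf Lb. \<exists>p. shortest_path V E l u w p \<and> v \<in> set p}"

definition density :: "(nat \<times> nat) set \<Rightarrow> real" where
  "density A = real (card A) / real (card (Domain A) + card (Range A))"

type_synonym state = "nat set \<times> (nat \<Rightarrow> nat set) \<times> (nat \<Rightarrow> nat set)"

definition whhl_step ::
  "nat set \<Rightarrow> (nat \<times> nat) set \<Rightarrow> (nat \<Rightarrow> nat \<Rightarrow> real) \<Rightarrow> state \<Rightarrow> state \<Rightarrow> bool" where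
  "whhl_step V E l st st' =
    (case st of (S, Lf, Lb) \<Rightarrow> case st' of (S', Lf', Lb') \<Rightarrow>
      uncovered V E l Lf Lb \<noteq> {} \<and>
      (\<exists>v \<in> V - S.
         (\<forall>v' \<in> V - S. density (center_graph V E l Lf Lb v') \<le> density (center_graph V E l Lf Lb v)) \<and>
         S' = insert v S \<and>
         Lf' = (\<lambda>u. if u \<in> Domain (center_graph V E l Lf Lb v) then insert v (Lf u) else Lf u) \<and>
         Lb' = (\<lambda>w. if w \<in> Range (center_graph V E l Lf Lb v) then insert v (Lb w) else Lb w)))"

text \<open>(Lf, Lb) is a possible output of w-HHL (for some resolution of ties).\<close>
definition whhl_output ::
  "nat set \<Rightarrow> (nat \<times> nat) set \<Rightarrow> (nat \<Rightarrow> nat \<Rightarrow> real) \<Rightarrow> (nat \<Rightarrow> nat set) \<Rightarrow> (nat \<Rightarrow> nat set) \<Rightarrow> bool" where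
  "whhl_output V E l Lf Lb \<longleftrightarrow>
     (\<exists>S. (whhl_step V E l)\<^sup>*\<^sup>* ({}, (\<lambda>_. {}), (\<lambda>_. {})) (S, Lf, Lb)) \<and> uncovered V E l Lf Lb = {}"

end

theory Submission
  imports Defs
begin

definition H :: "nat \<Rightarrow> real" where "H n = (\<Sum>k<n. 1 / real (Suc k))"

lemma H_0[simp]: "H 0 = 0" by (simp add: H_def)
lemma H_Suc: "H (Suc n) = H n + 1 / real (Suc n)" by (simp add: H_def)

lemma H_mono: "a \<le> b \<Longrightarrow> H a \<le> H b"
  unfolding H_def by (rule sum_mono2) auto

lemma H_diff: "a \<le> b \<Longrightarrow> real (b - a) \<le> real b * (H b - H a)"
proof (induction b)
  case 0 then show ?case by simp
next
  case (Suc b)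
  show ?case
  proof (cases "a = Suc b")
    case True then show ?thesis by simp
  next
    case False
    then have ab: "a \<le> b" using Suc.prems by simp
    have IH: "real (b - a) \<le> real b * (H b - H a)" using Suc.IH ab by simp
    have m: "0 \<le> H b - H a" using H_mono[OF ab] by simp
    have "real (Suc b - a) = real (b - a) + 1" using ab by simp
    also have "\<dots> \<le> real b * (H b - H a) + 1" using IH by simp
    also have "\<dots> \<le> real (Suc b) * (H b - H a) + 1" using m by (simp add: mult_right_mono)
    also have "\<dots> = real (Suc b) * (H (Suc b) - H a)" by (simp add: H_Suc algebra_simps)
    finally show ?thesis .
  qed
qed

lemma ln_step: "1 \<le> n \<Longrightarrow> 1 / real (Suc n) \<le> ln (real (Suc n)) - ln (real n)"
proof -
  assume n: "1 \<le> n"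
  have pos: "0 < real n / real (Suc n)" using n by simp
  have "ln (real n / real (Suc n)) \<le> real n / real (Suc n) - 1" by (rule ln_le_minus_one[OF pos])
  moreover have "ln (real n / real (Suc n)) = ln (real n) - ln (real (Suc n))" using n by (simp add: ln_div)
  moreover have "real n / real (Suc n) - 1 = - (1 / real (Suc n))" by (simp add: field_simps)
  ultimately show ?thesis by linarith
qed

lemma H_ln: "1 \<le> n \<Longrightarrow> H n \<le> 1 + ln (real n)"
proof (induction n)
  case 0 then show ?case by simp
next
  case (Suc n)
  show ?case
  proof (cases "n = 0")
    case True then show ?thesis by (simp add: H_Suc)
  next
    case False
    then have "H n \<le> 1 + ln (real n)" using Suc.IH by simp
    then show ?thesis using ln_step[of n] False by (simp add: H_Suc)
  qed
qed

lemma ln2: "1/2 \<le> ln (2::real)"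
proof -
  have "ln (1/2::real) \<le> 1/2 - 1" by (rule ln_le_minus_one) simp
  then show ?thesis by (simp add: ln_div)
qed

lemma covers_mono:
  "covers V E l Lf Lb u w \<Longrightarrow> Lf u \<subseteq> Lf2 u \<Longrightarrow> Lb w \<subseteq> Lb2 w \<Longrightarrow> covers V E l Lf2 Lb2 u w"
  unfolding covers_def by (meson IntD1 IntD2 IntI subsetD)

lemma uncovered_mono:
  "(\<And>u. Lf u \<subseteq> Lf2 u) \<Longrightarrow> (\<And>w. Lb w \<subseteq> Lb2 w) \<Longrightarrow>
   uncovered V E l Lf2 Lb2 \<subseteq> uncovered V E l Lf Lb"
  unfolding uncovered_def using covers_mono[of V E l Lf Lb _ _ Lf2 Lb2] by auto

lemma uncovered_sub: "uncovered V E l Lf Lb \<subseteq> V \<times> V"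
  unfolding uncovered_def by auto

lemma center_sub: "center_graph V E l Lf Lb v \<subseteq> uncovered V E l Lf Lb"
  unfolding center_graph_def by auto

lemma center_sub2: "center_graph V E l Lf Lb v \<subseteq> V \<times> V"
  using center_sub uncovered_sub by blast

lemma center_mono:
  "uncovered V E l Lf2 Lb2 \<subseteq> uncovered V E l Lf Lb \<Longrightarrow>
   center_graph V E l Lf2 Lb2 v \<subseteq> center_graph V E l Lf Lb v \<inter> uncovered V E l Lf2 Lb2"
  unfolding center_graph_def by auto

lemma card_insert_le1: "card (insert x A) \<le> card A + 1"
  by (cases "finite A") (auto simp: card_insert_if)

lemma sum_insert_le:
  assumes "finite V" "D \<subseteq> V"
  shows "(\<Sum>u\<in>V. card (if u \<in> D then insert v (L u) else L u)) \<le> (\<Sum>u\<in>V. card (L u)) + card D"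
proof -
  have "(\<Sum>u\<in>V. card (if u \<in> D then insert v (L u) else L u)) \<le> (\<Sum>u\<in>V. card (L u) + (if u \<in> D then 1 else 0))"
    by (rule sum_mono) (use card_insert_le1 in auto)
  also have "\<dots> = (\<Sum>u\<in>V. card (L u)) + card D"
    using assms by (simp add: sum.distrib sum.If_cases Int_absorb1)
  finally show ?thesis .
qed

lemma density_ge_half:
  assumes "finite G" "G \<noteq> {}"
  shows "1/2 \<le> density G"
proof -
  have d: "card (Domain G) \<le> card G" unfolding Domain_fst using assms card_image_le by blast
  have r: "card (Range G) \<le> card G" unfolding Range_snd using assms card_image_le by blast
  have "0 < card (Domain G)" using assms by (auto simp: card_gt_0_iff Domain_fst)
  then show ?thesis unfolding density_def using d r by (simp add: field_simps)
qed

lemma density_ge_n: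
  assumes "finite V" "G \<subseteq> V \<times> V" "G \<noteq> {}"
  shows "real (card G) / (2 * real (card V)) \<le> density G"
proof -
  have fG: "finite G" using assms finite_subset by blast
  have "Domain G \<subseteq> V" "Range G \<subseteq> V" using assms(2) by auto
  then have d: "card (Domain G) \<le> card V" "card (Range G) \<le> card V" using assms(1) card_mono by metis+
  have "0 < card (Domain G)" using assms fG by (auto simp: card_gt_0_iff Domain_fst)
  then show ?thesis unfolding density_def using d
    by (intro divide_left_mono) auto
qed

lemma double_count:
  assumes "finite V" "\<forall>u\<in>V. L u \<subseteq> V"
  shows "(\<Sum>h\<in>V. card {u\<in>V. h \<in> L u}) = (\<Sum>u\<in>V. card (L u))"
proof -
  have "(\<Sum>h\<in>V. card {u\<in>V. h \<in> L u}) = (\<Sum>h\<in>V. \<Sum>u\<in>V. if h \<in> L u then 1 else 0)"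
    using assms(1) by (simp add: sum.inter_filter[symmetric])
  also have "\<dots> = (\<Sum>u\<in>V. \<Sum>h\<in>V. if h \<in> L u then 1 else 0)" by (rule sum.swap)
  also have "\<dots> = (\<Sum>u\<in>V. card {h\<in>V. h \<in> L u})"
    using assms(1) by (simp add: sum.inter_filter[symmetric])
  also have "\<dots> = (\<Sum>u\<in>V. card (L u))"
    proof (intro sum.cong refl)
    fix u assume "u \<in> V"
    then have "{h\<in>V. h \<in> L u} = L u" using assms(2) by auto
    then show "card {h\<in>V. h \<in> L u} = card (L u)" by simp
  qed
  finally show ?thesis .
qed

lemma real_key:
  fixes a c r d n s :: real
  assumes "r * c \<le> a" "4 * a \<le> c^2" "0 < a" "0 \<le> r" "0 \<le> c"
    "1/2 \<le> d" "a / (2 * n) \<le> d" "s^2 = n" "0 < s"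
  shows "r \<le> d * s"
proof -
  have n: "0 < n" using assms by auto
  have "(r*c)^2 \<le> a^2" using assms(1,4,5) by (intro power_mono) auto
  then have "4 * a * r^2 \<le> a^2" using assms(2,4) mult_right_mono[OF assms(2), of "r^2"]
    by (simp add: power_mult_distrib algebra_simps)
  then have r2: "4 * r^2 \<le> a" using assms(3) by (simp add: power2_eq_square)
  have "a \<le> 2 * n * d" using assms(7) n by (simp add: field_simps)
  then have h: "2 * r^2 \<le> s^2 * d" using r2 assms(8) by simp
  show ?thesis
  proof (rule ccontr)
    assume "\<not> r \<le> d * s"
    then have "d * s < r" by simp
    moreover have "0 \<le> d * s" using assms by simp
    ultimately have "(d*s)^2 < r^2" by (simp add: power_strict_mono)
    then have "2 * (d*s)^2 < s^2 * d" using h by simp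
    then have "s^2 * (2*d*d) < s^2 * d" by (simp add: power_mult_distrib algebra_simps power2_eq_square)
    then have "2*d*d < d" using assms(9) by (simp add: mult_less_cancel_left)
    moreover have "1 * d \<le> (2*d) * d" by (rule mult_right_mono) (use assms(6) in auto)
    ultimately show False by simp
  qed
qed

lemma key:
  assumes fin: "finite V"
  and HL: "is_HL V E l Lf' Lb'"
  and ne: "uncovered V E l Lf Lb \<noteq> {}"
  and inv: "\<forall>v\<in>S. center_graph V E l Lf Lb v = {}"
  shows "\<exists>h\<in>V-S. real (card (uncovered V E l Lf Lb))
           \<le> density (center_graph V E l Lf Lb h) * sqrt (real (card V)) * real (hl_size V Lf' Lb')"
proof -
  define U where "U = uncovered V E l Lf Lb"
  define G where "G h = center_graph V E l Lf Lb h" for h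
  define X where "X h = {u\<in>V. h \<in> Lf' u}" for h
  define Y where "Y h = {u\<in>V. h \<in> Lb' u}" for h
  define A where "A h = G h \<inter> (X h \<times> Y h)" for h
  have labV: "\<forall>u\<in>V. Lf' u \<subseteq> V" "\<forall>u\<in>V. Lb' u \<subseteq> V" using HL unfolding is_HL_def by auto
  have finU: "finite U" unfolding U_def using uncovered_sub fin finite_subset by (metis finite_SigmaI)
  have GV: "G h \<subseteq> V \<times> V" for h unfolding G_def by (rule center_sub2)
  have finG: "finite (G h)" for h using GV fin finite_subset by (metis finite_SigmaI)
  have finA: "finite (A h)" for h unfolding A_def using finG by simp
  have cov: "U \<subseteq> (\<Union>h\<in>V. A h)"
  proof
    fix x assume x: "x \<in> U"
    obtain u w where xe: "x = (u, w)" by fastforce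
    have uw: "u \<in> V" "w \<in> V" "reachable V E u w" using x xe unfolding U_def uncovered_def by auto
    then have "covers V E l Lf' Lb' u w" using HL unfolding is_HL_def by blast
    then obtain h p where h: "h \<in> Lf' u" "h \<in> Lb' w" "shortest_path V E l u w p" "h \<in> set p"
      unfolding covers_def by blast
    have hV: "h \<in> V" using h(1) labV uw by blast
    have "(u, w) \<in> G h" using x xe h(3,4) unfolding G_def center_graph_def U_def by blast
    then have "x \<in> A h" using xe h uw unfolding A_def X_def Y_def by blast
    then show "x \<in> (\<Union>h\<in>V. A h)" using hV by blast
  qed
  have sumA: "card U \<le> (\<Sum>h\<in>V. card (A h))"
    using card_mono[OF _ cov] card_UN_le[OF fin, of A] fin finA by (meson finite_UN_I le_trans)
  have sumc: "(\<Sum>h\<in>V. card (X h) + card (Y h)) = hl_size V Lf' Lb'"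
    unfolding hl_size_def sum.distrib X_def Y_def
    using double_count[OF fin labV(1)] double_count[OF fin labV(2)] by simp
  obtain x0 where x0: "x0 \<in> U" using ne U_def by auto
  then obtain h0 where h0: "h0 \<in> V" "x0 \<in> A h0" using cov by blast
  have XYfin: "finite (X h)" "finite (Y h)" for h unfolding X_def Y_def using fin by auto
  have "X h0 \<noteq> {}" using h0 unfolding A_def by auto
  then have "0 < card (X h0)" using XYfin by (simp add: card_gt_0_iff)
  also have "card (X h0) \<le> card (X h0) + card (Y h0)" by simp
  also have "\<dots> \<le> hl_size V Lf' Lb'" unfolding sumc[symmetric]
    using fin h0(1) by (intro member_le_sum) auto
  finally have Opos: "0 < real (hl_size V Lf' Lb')" by simp
  define Opt where "Opt = real (hl_size V Lf' Lb')"
  define r where "r = real (card U) / Opt"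
  have rO: "r * Opt = real (card U)" unfolding r_def using Opos Opt_def by simp
  have r0: "0 \<le> r" unfolding r_def Opt_def using Opos by simp
  have "\<exists>h\<in>V. 0 < card (A h) \<and> r * real (card (X h) + card (Y h)) \<le> real (card (A h))"
  proof (rule ccontr)
    assume nex: "\<not> ?thesis"
    have le: "\<forall>h\<in>V. real (card (A h)) \<le> r * real (card (X h) + card (Y h))"
    proof
      fix h assume "h \<in> V"
      show "real (card (A h)) \<le> r * real (card (X h) + card (Y h))"
      proof (cases "card (A h) = 0")
        case True then show ?thesis using r0 by simp
      next
        case False
        then have "\<not> (r * real (card (X h) + card (Y h)) \<le> real (card (A h)))"
          using nex \<open>h \<in> V\<close> by auto
        then show ?thesis by linarith
      qed
    qed
    have "card (A h0) \<noteq> 0" using h0 finA by auto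
    then have "\<not> (r * real (card (X h0) + card (Y h0)) \<le> real (card (A h0)))"
      using nex h0(1) by auto
    then have lt: "real (card (A h0)) < r * real (card (X h0) + card (Y h0))" by linarith
    have "(\<Sum>h\<in>V. real (card (A h))) < (\<Sum>h\<in>V. r * real (card (X h) + card (Y h)))"
      by (rule sum_strict_mono_ex1[OF fin le]) (use lt h0(1) in blast)
    also have "\<dots> = r * Opt" unfolding Opt_def sum_distrib_left[symmetric] sumc[symmetric] by simp
    also have "\<dots> = real (card U)" by (rule rO)
    finally have "(\<Sum>h\<in>V. real (card (A h))) < real (card U)" .
    moreover have "real (card U) \<le> (\<Sum>h\<in>V. real (card (A h)))" using sumA
      by (metis of_nat_le_iff of_nat_sum)
    ultimately show False by simp
  qed
  then obtain h where h: "h \<in> V" "0 < card (A h)" "r * real (card (X h) + card (Y h)) \<le> real (card (A h))"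
    by blast
  have Ane: "A h \<noteq> {}" using h(2) by auto
  then have Gne: "G h \<noteq> {}" unfolding A_def by auto
  then have hS: "h \<notin> S" using inv unfolding G_def by auto
  have aG: "card (A h) \<le> card (G h)" unfolding A_def using finG by (intro card_mono) auto
  have aXY: "card (A h) \<le> card (X h) * card (Y h)"
    using card_mono[of "X h \<times> Y h" "A h"] XYfin unfolding A_def by (simp add: card_cartesian_product)
  define a where "a = real (card (A h))"
  define c where "c = real (card (X h) + card (Y h))"
  define d where "d = density (G h)"
  define n where "n = real (card V)"
  have "4 * a \<le> c^2"
  proof -
    have "4 * a \<le> 4 * (real (card (X h)) * real (card (Y h)))" unfolding a_def using aXY
      by (metis mult_le_cancel_left_pos of_nat_le_iff of_nat_mult zero_less_numeral)
    also have "\<dots> \<le> c^2" unfolding c_def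
    proof -
      define x where "x = real (card (X h))"
      define y where "y = real (card (Y h))"
      have "0 \<le> (x - y)^2" by simp
      then have "4 * (x * y) \<le> (x + y)^2" by (simp add: power2_eq_square algebra_simps)
      then show "4 * (real (card (X h)) * real (card (Y h))) \<le> (real (card (X h) + card (Y h)))^2"
        unfolding x_def y_def by simp
    qed
    finally show ?thesis .
  qed
  moreover have "1/2 \<le> d" unfolding d_def using density_ge_half finG Gne by blast
  moreover have "a / (2 * n) \<le> d"
  proof -
    have "a / (2 * n) \<le> real (card (G h)) / (2 * n)" unfolding a_def n_def using aG by (intro divide_right_mono) auto
    also have "\<dots> \<le> d" unfolding d_def n_def by (rule density_ge_n[OF fin GV Gne])
    finally show ?thesis .
  qed
  moreover have "(sqrt n)^2 = n" unfolding n_def by simp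
  moreover have "0 < sqrt n" unfolding n_def using h(1) fin by (auto simp: card_gt_0_iff)
  moreover have "0 < a" unfolding a_def using h(2) by simp
  ultimately have "r \<le> d * sqrt n"
    using real_key[of r c a d n "sqrt n"] h(3) r0 unfolding a_def c_def by simp
  then have "r * Opt \<le> d * sqrt n * Opt" using Opos Opt_def by (simp add: mult_right_mono)
  then have "real (card U) \<le> d * sqrt n * Opt" using rO by simp
  then show ?thesis using h(1) hS unfolding d_def n_def Opt_def G_def U_def by blast
qed

lemma step_inv:
  assumes fin: "finite V"
  and HL: "is_HL V E l Lf' Lb'"
  and K: "K = sqrt (real (card V)) * real (hl_size V Lf' Lb')"
  and st: "whhl_step V E l (S, Lf, Lb) (S2, Lf2, Lb2)"
  and inv: "\<forall>v\<in>S. center_graph V E l Lf Lb v = {}"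
  and hl: "real (hl_size V Lf Lb) \<le> K * (H N0 - H (card (uncovered V E l Lf Lb)))"
  shows "(\<forall>v\<in>S2. center_graph V E l Lf2 Lb2 v = {}) \<and>
         real (hl_size V Lf2 Lb2) \<le> K * (H N0 - H (card (uncovered V E l Lf2 Lb2)))"
proof -
  define U where "U = uncovered V E l Lf Lb"
  define U2 where "U2 = uncovered V E l Lf2 Lb2"
  have Une: "U \<noteq> {}" using st unfolding whhl_step_def U_def by simp
  obtain v where v: "v \<in> V - S"
    and mx: "\<forall>v'\<in>V - S. density (center_graph V E l Lf Lb v') \<le> density (center_graph V E l Lf Lb v)"
    and S2: "S2 = insert v S"
    and Lf2: "Lf2 = (\<lambda>u. if u \<in> Domain (center_graph V E l Lf Lb v) then insert v (Lf u) else Lf u)"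
    and Lb2: "Lb2 = (\<lambda>w. if w \<in> Range (center_graph V E l Lf Lb v) then insert v (Lb w) else Lb w)"
    using st unfolding whhl_step_def by auto
  define G where "G = center_graph V E l Lf Lb v"
  define m where "m = card G"
  define c where "c = card (Domain G) + card (Range G)"
  have K0: "0 \<le> K" unfolding K by simp
  obtain h where h: "h \<in> V - S"
    "real (card U) \<le> density (center_graph V E l Lf Lb h) * sqrt (real (card V)) * real (hl_size V Lf' Lb')"
    using key[OF fin HL Une[unfolded U_def] inv] unfolding U_def by blast
  have "real (card U) \<le> density (center_graph V E l Lf Lb h) * K" using h(2) unfolding K by (simp add: mult.assoc)
  also have "\<dots> \<le> density G * K" unfolding G_def using mx h(1) K0 by (simp add: mult_right_mono)
  finally have dG: "real (card U) \<le> density G * K" .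
  have GV: "G \<subseteq> V \<times> V" unfolding G_def by (rule center_sub2)
  have finG: "finite G" using GV fin finite_subset by (metis finite_SigmaI)
  have finU: "finite U" unfolding U_def using uncovered_sub fin finite_subset by (metis finite_SigmaI)
  have GU: "G \<subseteq> U" unfolding G_def U_def by (rule center_sub)
  have grow1: "Lf u \<subseteq> Lf2 u" for u unfolding Lf2 by auto
  have grow2: "Lb u \<subseteq> Lb2 u" for u unfolding Lb2 by auto
  have U2U: "U2 \<subseteq> U" unfolding U_def U2_def by (rule uncovered_mono[OF grow1 grow2])
  have GU2: "G \<inter> U2 = {}"
  proof (rule ccontr)
    assume "G \<inter> U2 \<noteq> {}"
    then obtain u w where uw: "(u, w) \<in> G" "(u, w) \<in> U2" by auto
    then obtain p where p: "shortest_path V E l u w p" "v \<in> set p" unfolding G_def center_graph_def by blast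
    have "v \<in> Lf2 u" using uw(1) unfolding Lf2 G_def by (auto intro: Domain.intros)
    moreover have "v \<in> Lb2 w" using uw(1) unfolding Lb2 G_def by (auto intro: Range.intros)
    ultimately have "covers V E l Lf2 Lb2 u w" unfolding covers_def using p by blast
    then show False using uw(2) unfolding U2_def uncovered_def by auto
  qed
  have "U2 \<subseteq> U - G" using U2U GU2 by blast
  then have "card U2 \<le> card (U - G)" using finU by (intro card_mono) auto
  also have "\<dots> = card U - m" unfolding m_def using card_Diff_subset[OF finG GU] .
  finally have cU2: "card U2 \<le> card U - m" .
  have mU: "m \<le> card U" unfolding m_def using card_mono[OF finU GU] .
  have hlstep: "hl_size V Lf2 Lb2 \<le> hl_size V Lf Lb + c"
  proof -
    have D: "Domain G \<subseteq> V" "Range G \<subseteq> V" using GV by auto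
    have "hl_size V Lf2 Lb2 = (\<Sum>u\<in>V. card (Lf2 u)) + (\<Sum>u\<in>V. card (Lb2 u))"
      unfolding hl_size_def by (simp add: sum.distrib)
    also have "(\<Sum>u\<in>V. card (Lf2 u)) \<le> (\<Sum>u\<in>V. card (Lf u)) + card (Domain G)"
      unfolding Lf2 G_def using sum_insert_le[OF fin D(1)[unfolded G_def], of v Lf] by simp
    also have "(\<Sum>u\<in>V. card (Lb2 u)) \<le> (\<Sum>u\<in>V. card (Lb u)) + card (Range G)"
      unfolding Lb2 G_def using sum_insert_le[OF fin D(2)[unfolded G_def], of v Lb] by simp
    finally show ?thesis unfolding hl_size_def c_def by (simp add: sum.distrib)
  qed
  have cU: "real c * real (card U) \<le> K * real m"
  proof (cases "c = 0")
    case True then show ?thesis using K0 by simp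
  next
    case False
    have "density G = real m / real c" unfolding density_def m_def c_def by simp
    then have "real (card U) \<le> real m / real c * K" using dG by simp
    then have "real (card U) \<le> real m * K / real c" by simp
    then have "real (card U) * real c \<le> real m * K" using False by (simp add: pos_le_divide_eq)
    then show ?thesis by (simp add: algebra_simps)
  qed
  have Upos: "0 < card U" using Une finU by (simp add: card_gt_0_iff)
  have "real m \<le> real (card U - card U2)" using cU2 mU by simp
  also have "\<dots> \<le> real (card U) * (H (card U) - H (card U2))"
    by (rule H_diff) (use U2U finU card_mono in auto)
  finally have "K * real m \<le> K * (real (card U) * (H (card U) - H (card U2)))" using K0 by (simp add: mult_left_mono)
  then have "real c * real (card U) \<le> (K * (H (card U) - H (card U2))) * real (card U)" using cU by (simp add: algebra_simps)
  then have cle: "real c \<le> K * (H (card U) - H (card U2))" using Upos by simp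
  have "real (hl_size V Lf2 Lb2) \<le> real (hl_size V Lf Lb) + real c" using hlstep by linarith
  also have "\<dots> \<le> K * (H N0 - H (card U2))" using hl cle unfolding U_def by (simp add: algebra_simps)
  finally have part2: "real (hl_size V Lf2 Lb2) \<le> K * (H N0 - H (card U2))" .
  have part1: "\<forall>v'\<in>S2. center_graph V E l Lf2 Lb2 v' = {}"
  proof
    fix v' assume "v' \<in> S2"
    have sub: "center_graph V E l Lf2 Lb2 v' \<subseteq> center_graph V E l Lf Lb v' \<inter> U2"
      unfolding U2_def by (rule center_mono) (use U2U U_def U2_def in simp)
    show "center_graph V E l Lf2 Lb2 v' = {}"
    proof (cases "v' = v")
      case True then show ?thesis using sub GU2 unfolding G_def by blast
    next
      case False then have "v' \<in> S" using \<open>v' \<in> S2\<close> S2 by simp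
      then show ?thesis using sub inv by blast
    qed
  qed
  show ?thesis using part1 part2 unfolding U2_def by simp
qed

theorem mainTheorem6:
  shows "\<exists>C > 0. \<forall>V E l Lf Lb Lf' Lb'.
     graph_ok V E l \<and> 2 \<le> card V \<and> whhl_output V E l Lf Lb \<and> is_HL V E l Lf' Lb' \<longrightarrow>
     real (hl_size V Lf Lb) \<le> C * sqrt (real (card V)) * ln (real (card V)) * real (hl_size V Lf' Lb')"
proof (intro exI[of _ 4] conjI allI impI)
  show "(0::real) < 4" by simp
  fix V E l Lf Lb Lf' Lb'
  assume a: "graph_ok V E l \<and> 2 \<le> card V \<and> whhl_output V E l Lf Lb \<and> is_HL V E l Lf' Lb'"
  have fin: "finite V" using a unfolding graph_ok_def by simp
  have n2: "2 \<le> card V" using a by simp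
  have HL: "is_HL V E l Lf' Lb'" using a by simp
  obtain S where rt: "(whhl_step V E l)\<^sup>*\<^sup>* ({}, (\<lambda>_. {}), (\<lambda>_. {})) (S, Lf, Lb)"
    and fincov: "uncovered V E l Lf Lb = {}" using a unfolding whhl_output_def by blast
  define n where "n = real (card V)"
  define K where "K = sqrt (real (card V)) * real (hl_size V Lf' Lb')"
  define N0 where "N0 = card (uncovered V E l (\<lambda>_. {}) (\<lambda>_. {}))"
  define P where "P st = (case st of (S, Lf, Lb) \<Rightarrow> (\<forall>v\<in>S. center_graph V E l Lf Lb v = {}) \<and>
         real (hl_size V Lf Lb) \<le> K * (H N0 - H (card (uncovered V E l Lf Lb))))" for st
  have "P (S, Lf, Lb)" using rt
  proof (induction rule: rtranclp_induct)
    case base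
    then show ?case unfolding P_def hl_size_def N0_def by simp
  next
    case (step y z)
    obtain S1 Lf1 Lb1 where y: "y = (S1, Lf1, Lb1)" by (cases y) auto
    obtain S2 Lf2 Lb2 where z: "z = (S2, Lf2, Lb2)" by (cases z) auto
    have i: "\<forall>v\<in>S1. center_graph V E l Lf1 Lb1 v = {}"
      "real (hl_size V Lf1 Lb1) \<le> K * (H N0 - H (card (uncovered V E l Lf1 Lb1)))"
      using step(3) unfolding y P_def by simp_all
    show ?case using step_inv[OF fin HL K_def step(2)[unfolded y z] i] unfolding z P_def by simp
  qed
  then have hl: "real (hl_size V Lf Lb) \<le> K * H N0" unfolding P_def using fincov by simp
  have N0le: "N0 \<le> card V * card V" unfolding N0_def
    using card_mono[OF finite_cartesian_product[OF fin fin] uncovered_sub] by (simp add: card_cartesian_product)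
  have lnn: "1/2 \<le> ln n"
  proof -
    have "ln 2 \<le> ln n" unfolding n_def using n2 by simp
    then show ?thesis using ln2 by simp
  qed
  have HN: "H N0 \<le> 1 + 2 * ln n"
  proof (cases "N0 = 0")
    case True then show ?thesis using lnn by simp
  next
    case False
    then have "H N0 \<le> 1 + ln (real N0)" by (intro H_ln) simp
    also have "ln (real N0) \<le> ln (n * n)" unfolding n_def using N0le False n2
      by (subst ln_le_cancel_iff) (auto simp flip: of_nat_mult)
    also have "ln (n * n) = 2 * ln n" unfolding n_def using n2 by (simp add: ln_mult)
    finally show ?thesis by simp
  qed
  also have "\<dots> \<le> 4 * ln n" using lnn by simp
  finally have HN4: "H N0 \<le> 4 * ln n" .
  have K0: "0 \<le> K" unfolding K_def by simp
  have "real (hl_size V Lf Lb) \<le> K * (4 * ln n)" using hl mult_left_mono[OF HN4 K0] by linarith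
  then show "real (hl_size V Lf Lb) \<le> 4 * sqrt (real (card V)) * ln (real (card V)) * real (hl_size V Lf' Lb')"
    unfolding K_def n_def by (simp add: algebra_simps)
qed

end
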